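(* Let $n=2$ and let $t\mapsto (q(t),p(t))$ be a solution of $\dot q_i=\partial H/\partial p_i$, $\dot p_i=-\partial H/\partial q_i$, $H=\frac12\sum_{i,j=1}^2p_ip_je^{-|q_i-q_j|}$, with $q_1(0)>q_2(0)$, normalized so that $p_1^2+p_2^2+2p_1p_2e^{-|q_1-q_2|}=1$. If $|p_1+p_2|<1$ and $p_1-p_2<0$ at $t=0$, then $q_1(t)-q_2(t)\to0$ in finite time (the trajectory reaches the singular set $\{q_1=q_2\}$ in finite time). If $|p_1+p_2|=1$ and $p_1-p_2<0$ at $t=0$, then $q_1(t)-q_2(t)\to0$ as $t\to\infty$ (the singular set is approached only asymptotically).
   Context: The quantity $p_1+p_2$ is constant along solutions. *)

theory Defs
  imports "HOL-Analysis.Analysis"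
begin

text \<open>Positions and momenta are functions on the index set {1,2} (values at
other indices are irrelevant). The Hamiltonian for n = 2.\<close>

definition H :: "(nat \<Rightarrow> real) \<Rightarrow> (nat \<Rightarrow> real) \<Rightarrow> real" where
  "H q p = 1/2 * (\<Sum>i\<in>{1,2::nat}. \<Sum>j\<in>{1,2::nat}. p i * p j * exp (- \<bar>q i - q j\<bar>))"

definition hamilton_solution ::
  "real set \<Rightarrow> (real \<Rightarrow> nat \<Rightarrow> real) \<Rightarrow> (real \<Rightarrow> nat \<Rightarrow> real) \<Rightarrow> bool" where
  "hamilton_solution I q p \<longleftrightarrow>
     (\<forall>t\<in>I. \<forall>i\<in>{1,2::nat}. \<exists>a b.
        ((\<lambda>x. H (q t) ((p t)(i := x))) has_real_derivative a) (at (p t i)) \<and>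
        ((\<lambda>x. H ((q t)(i := x)) (p t)) has_real_derivative b) (at (q t i)) \<and>
        ((\<lambda>s. q s i) has_real_derivative a) (at t within I) \<and>
        ((\<lambda>s. p s i) has_real_derivative (- b)) (at t within I))"

definition fwd :: "ereal \<Rightarrow> real set" where
  "fwd b = {t. 0 \<le> t \<and> ereal t < b}"

definition regular_solution ::
  "ereal \<Rightarrow> (real \<Rightarrow> nat \<Rightarrow> real) \<Rightarrow> (real \<Rightarrow> nat \<Rightarrow> real) \<Rightarrow> bool" where
  "regular_solution b q p \<longleftrightarrow>
     hamilton_solution (fwd b) q p \<and> (\<forall>t\<in>fwd b. q t 1 > q t 2)"

definition maximal_solution ::
  "ereal \<Rightarrow> (real \<Rightarrow> nat \<Rightarrow> real) \<Rightarrow> (real \<Rightarrow> nat \<Rightarrow> real) \<Rightarrow> bool" where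
  "maximal_solution b q p \<longleftrightarrow>
     regular_solution b q p \<and>
     (\<forall>b' q' p'. regular_solution b' q' p' \<and>
        (\<forall>i\<in>{1,2::nat}. q' 0 i = q 0 i \<and> p' 0 i = p 0 i) \<longrightarrow> b' \<le> b)"

end

theory Submission
  imports Defs
begin

lemma H_eq: "H q p = ((p 1)^2 + (p 2)^2 + 2 * p 1 * p 2 * exp (- \<bar>q 1 - q 2\<bar>))/2"
  unfolding H_def by (simp add: abs_minus_commute power2_eq_square algebra_simps)

lemma PD_p1: "((\<lambda>x. H q (p(1:=x))) has_real_derivative (p 1 + p 2 * exp(-\<bar>q 1 - q 2\<bar>))) (at (p 1))"
  unfolding H_eq by (auto intro!: derivative_eq_intros simp: algebra_simps)

lemma PD_p2: "((\<lambda>x. H q (p(2:=x))) has_real_derivative (p 2 + p 1 * exp(-\<bar>q 1 - q 2\<bar>))) (at (p 2))"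
  unfolding H_eq by (auto intro!: derivative_eq_intros simp: algebra_simps)

lemma PD_q1: assumes "q 1 > q 2"
  shows "((\<lambda>x. H (q(1:=x)) p) has_real_derivative (- (p 1 * p 2 * exp(-(q 1 - q 2))))) (at (q 1))"
proof (rule has_field_derivative_transform_within_open[where S="{q 2<..}"])
  show "((\<lambda>x. ((p 1)^2 + (p 2)^2 + 2 * p 1 * p 2 * exp (- (x - q 2)))/2) has_real_derivative (- (p 1 * p 2 * exp(-(q 1 - q 2))))) (at (q 1))"
    by (auto intro!: derivative_eq_intros simp: algebra_simps)
qed (use assms in \<open>auto simp: H_eq\<close>)

lemma PD_q2: assumes "q 1 > q 2"
  shows "((\<lambda>x. H (q(2:=x)) p) has_real_derivative (p 1 * p 2 * exp(-(q 1 - q 2)))) (at (q 2))"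
proof (rule has_field_derivative_transform_within_open[where S="{..<q 1}"])
  show "((\<lambda>x. ((p 1)^2 + (p 2)^2 + 2 * p 1 * p 2 * exp (- (q 1 - x)))/2) has_real_derivative (p 1 * p 2 * exp(-(q 1 - q 2)))) (at (q 2))"
    by (auto intro!: derivative_eq_intros simp: algebra_simps)
qed (use assms in \<open>auto simp: H_eq\<close>)


lemma DF:
  assumes hs: "hamilton_solution I q p" and t: "t \<in> I" and pos: "q t 1 > q t 2"
  shows "((\<lambda>s. q s 1) has_real_derivative (p t 1 + p t 2 * exp(-(q t 1 - q t 2)))) (at t within I)"
    "((\<lambda>s. q s 2) has_real_derivative (p t 2 + p t 1 * exp(-(q t 1 - q t 2)))) (at t within I)"
    "((\<lambda>s. p s 1) has_real_derivative (p t 1 * p t 2 * exp(-(q t 1 - q t 2)))) (at t within I)"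
    "((\<lambda>s. p s 2) has_real_derivative (- (p t 1 * p t 2 * exp(-(q t 1 - q t 2))))) (at t within I)"
proof -
  have ab: "\<bar>q t 1 - q t 2\<bar> = q t 1 - q t 2" using pos by simp
  from hs t obtain a b where
    1: "((\<lambda>x. H (q t) ((p t)(1 := x))) has_real_derivative a) (at (p t 1))"
       "((\<lambda>x. H ((q t)(1 := x)) (p t)) has_real_derivative b) (at (q t 1))"
       "((\<lambda>s. q s 1) has_real_derivative a) (at t within I)"
       "((\<lambda>s. p s 1) has_real_derivative (- b)) (at t within I)"
    unfolding hamilton_solution_def by fastforce
  from hs t obtain a' b' where
    2: "((\<lambda>x. H (q t) ((p t)(2 := x))) has_real_derivative a') (at (p t 2))"
       "((\<lambda>x. H ((q t)(2 := x)) (p t)) has_real_derivative b') (at (q t 2))"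
       "((\<lambda>s. q s 2) has_real_derivative a') (at t within I)"
       "((\<lambda>s. p s 2) has_real_derivative (- b')) (at t within I)"
    unfolding hamilton_solution_def by fastforce
  have "a = p t 1 + p t 2 * exp(-(q t 1 - q t 2))"
    using DERIV_unique[OF 1(1) PD_p1[of "q t" "p t"]] ab by simp
  moreover have "b = - (p t 1 * p t 2 * exp(-(q t 1 - q t 2)))"
    using DERIV_unique[OF 1(2) PD_q1[of "q t" "p t", OF pos]] by simp
  moreover have "a' = p t 2 + p t 1 * exp(-(q t 1 - q t 2))"
    using DERIV_unique[OF 2(1) PD_p2[of "q t" "p t"]] ab by simp
  moreover have "b' = p t 1 * p t 2 * exp(-(q t 1 - q t 2))"
    using DERIV_unique[OF 2(2) PD_q2[of "q t" "p t", OF pos]] by simp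
  ultimately show
    "((\<lambda>s. q s 1) has_real_derivative (p t 1 + p t 2 * exp(-(q t 1 - q t 2)))) (at t within I)"
    "((\<lambda>s. q s 2) has_real_derivative (p t 2 + p t 1 * exp(-(q t 1 - q t 2)))) (at t within I)"
    "((\<lambda>s. p s 1) has_real_derivative (p t 1 * p t 2 * exp(-(q t 1 - q t 2)))) (at t within I)"
    "((\<lambda>s. p s 2) has_real_derivative (- (p t 1 * p t 2 * exp(-(q t 1 - q t 2))))) (at t within I)"
    using 1 2 by auto
qed

lemma GC:
  fixes m x S :: "real \<Rightarrow> real" and P :: real
  assumes dm: "\<And>t. t \<in> I \<Longrightarrow> (m has_real_derivative ((P^2 - (m t)^2) * exp (- x t) / 2)) (at t within I)"
    and dx: "\<And>t. t \<in> I \<Longrightarrow> (x has_real_derivative (m t * (1 - exp (- x t)))) (at t within I)"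
    and dS: "\<And>t. t \<in> I \<Longrightarrow> (S has_real_derivative (P * (1 + exp (- x t)))) (at t within I)"
    and xpos: "\<And>t. t \<in> I \<Longrightarrow> x t > 0"
  defines "q' \<equiv> \<lambda>t i. if i = (1::nat) then (S t + x t)/2 else (S t - x t)/2"
    and "p' \<equiv> \<lambda>t i. if i = (1::nat) then (P + m t)/2 else (P - m t)/2"
  shows "hamilton_solution I q' p'" "\<And>t. t \<in> I \<Longrightarrow> q' t 1 > q' t 2"
proof -
  show "\<And>t. t \<in> I \<Longrightarrow> q' t 1 > q' t 2" using xpos by (simp add: q'_def)
  show "hamilton_solution I q' p'"
    unfolding hamilton_solution_def
  proof (intro ballI)
    fix t i assume t: "t \<in> I" and i: "i \<in> {1,2::nat}"
    have pos: "q' t 1 > q' t 2" using xpos[OF t] by (simp add: q'_def)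
    have ab: "\<bar>q' t 1 - q' t 2\<bar> = x t" "q' t 1 - q' t 2 = x t" using xpos[OF t] by (simp_all add: q'_def field_simps)
    have q1: "((\<lambda>s. q' s 1) has_real_derivative (p' t 1 + p' t 2 * exp(- x t))) (at t within I)"
      unfolding q'_def p'_def
      by (auto intro!: derivative_eq_intros dS[OF t] dx[OF t] simp: field_simps)
    have q2: "((\<lambda>s. q' s 2) has_real_derivative (p' t 2 + p' t 1 * exp(- x t))) (at t within I)"
      unfolding q'_def p'_def
      by (auto intro!: derivative_eq_intros dS[OF t] dx[OF t] simp: field_simps)
    have p1: "((\<lambda>s. p' s 1) has_real_derivative (- (-(p' t 1 * p' t 2 * exp(- x t))))) (at t within I)"
      unfolding p'_def
      by (auto intro!: derivative_eq_intros dm[OF t] simp: field_simps power2_eq_square)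
    have p2: "((\<lambda>s. p' s 2) has_real_derivative (- (p' t 1 * p' t 2 * exp(- x t)))) (at t within I)"
      unfolding p'_def
      by (auto intro!: derivative_eq_intros dm[OF t] simp: field_simps power2_eq_square)
    show "\<exists>a b. ((\<lambda>xa. H (q' t) ((p' t)(i := xa))) has_real_derivative a) (at (p' t i)) \<and>
               ((\<lambda>xa. H ((q' t)(i := xa)) (p' t)) has_real_derivative b) (at (q' t i)) \<and>
               ((\<lambda>s. q' s i) has_real_derivative a) (at t within I) \<and>
               ((\<lambda>s. p' s i) has_real_derivative - b) (at t within I)"
    proof (cases "i = 1")
      case True
      show ?thesis unfolding True
        using PD_p1[of "q' t" "p' t", unfolded ab(1)] PD_q1[of "q' t" "p' t", OF pos, unfolded ab(2)] q1 p1 by blast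
    next
      case False
      then have i2: "i = 2" using i by auto
      show ?thesis unfolding i2
        using PD_p2[of "q' t" "p' t", unfolded ab(1)] PD_q2[of "q' t" "p' t", OF pos, unfolded ab(2)] q2 p2 by blast
    qed
  qed
qed


lemma convex_fwd: "convex (fwd b)"
proof (rule is_interval_convex)
  show "is_interval (fwd b)" unfolding is_interval_1 fwd_def
    by (auto intro: le_less_trans[of _ "ereal _" b])
qed

lemma GA:
  assumes reg: "regular_solution b q p" and z: "0 \<in> fwd b" and t: "t \<in> fwd b"
  shows "p t 1 + p t 2 = p 0 1 + p 0 2"
    "(p t 1)^2 + (p t 2)^2 + 2*p t 1*p t 2*exp(-(q t 1 - q t 2)) = (p 0 1)^2 + (p 0 2)^2 + 2*p 0 1*p 0 2*exp(-(q 0 1 - q 0 2))"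
    "((\<lambda>s. p s 1 - p s 2) has_real_derivative 2*p t 1*p t 2*exp(-(q t 1 - q t 2))) (at t within fwd b)"
    "((\<lambda>s. q s 1 - q s 2) has_real_derivative (p t 1 - p t 2)*(1 - exp(-(q t 1 - q t 2)))) (at t within fwd b)"
proof -
  have hs: "hamilton_solution (fwd b) q p" and pos: "\<And>t. t \<in> fwd b \<Longrightarrow> q t 1 > q t 2"
    using reg unfolding regular_solution_def by auto
  note D = DF[OF hs _ pos]
  have "\<exists>c. \<forall>s\<in>fwd b. p s 1 + p s 2 = c"
  proof (rule has_field_derivative_zero_constant[OF convex_fwd])
    fix s assume s: "s \<in> fwd b"
    show "((\<lambda>s. p s 1 + p s 2) has_real_derivative 0) (at s within fwd b)"
      using D(3)[OF s s] D(4)[OF s s] by (auto intro!: derivative_eq_intros)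
  qed
  then show "p t 1 + p t 2 = p 0 1 + p 0 2" using t z by metis
  have "\<exists>c. \<forall>s\<in>fwd b. (p s 1)^2 + (p s 2)^2 + 2*p s 1*p s 2*exp(-(q s 1 - q s 2)) = c"
  proof (rule has_field_derivative_zero_constant[OF convex_fwd])
    fix s assume s: "s \<in> fwd b"
    show "((\<lambda>s. (p s 1)^2 + (p s 2)^2 + 2*p s 1*p s 2*exp(-(q s 1 - q s 2))) has_real_derivative 0) (at s within fwd b)"
      using D(1)[OF s s] D(2)[OF s s] D(3)[OF s s] D(4)[OF s s]
      by (auto intro!: derivative_eq_intros simp: algebra_simps power2_eq_square)
  qed
  then show "(p t 1)^2 + (p t 2)^2 + 2*p t 1*p t 2*exp(-(q t 1 - q t 2)) = (p 0 1)^2 + (p 0 2)^2 + 2*p 0 1*p 0 2*exp(-(q 0 1 - q 0 2))"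
    using t z by metis
  show "((\<lambda>s. p s 1 - p s 2) has_real_derivative 2*p t 1*p t 2*exp(-(q t 1 - q t 2))) (at t within fwd b)"
    using D(3)[OF t t] D(4)[OF t t] by (auto intro!: derivative_eq_intros)
  show "((\<lambda>s. q s 1 - q s 2) has_real_derivative (p t 1 - p t 2)*(1 - exp(-(q t 1 - q t 2)))) (at t within fwd b)"
    using D(1)[OF t t] D(2)[OF t t] by (auto intro!: derivative_eq_intros simp: algebra_simps)
qed


lemma AL1:
  fixes p1 p2 x a c m r :: real
  assumes F: "p1^2 + p2^2 + 2*p1*p2*exp(-x) = 1" and xpos: "x > 0" and P: "\<bar>p1+p2\<bar> < 1"
    and a: "a = sqrt(2-(p1+p2)^2)" and c: "c = 2 - 2*(p1+p2)^2" and m: "m = p1 - p2"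
    and rdef: "r = (m-a)/(m+a)"
  shows "r \<noteq> 1" "r > 0" "m = a*(1+r)/(1-r)" "x = ln(1 + c*(1-r)^2/(4*a^2*r))" "m^2 > a^2" "m + a \<noteq> 0"
    "m^2 - a^2 = -4*p1*p2*exp(-x)" "a > 0" "a^2 = 2 - (p1+p2)^2"
proof -
  define E where "E = exp(-x)"
  have E0: "0 < E" "E < 1" using xpos by (auto simp: E_def)
  have P2: "(p1+p2)^2 < 1" using P by (simp add: abs_square_less_1)
  have a2: "a^2 = 2 - (p1+p2)^2" "a > 0" using P2 a by auto
  have Fe: "p1^2 + p2^2 + 2*p1*p2*E = 1" using F by (simp add: E_def)
  have "2*p1*p2*(1-E) = (p1+p2)^2 - 1" using Fe by (simp add: algebra_simps power2_eq_square)
  then have "2*(p1*p2*(1-E)) < 0" using P2 by (simp add: mult.assoc)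
  then have "p1*p2*(1-E) < 0" by simp
  then have pp: "p1*p2 < 0" using E0 by (simp add: mult_less_0_iff)
  have ma: "m^2 - a^2 = -4*p1*p2*E" using Fe a2(1) unfolding m by algebra
  have mP: "m^2 - (p1+p2)^2 = -4*p1*p2" unfolding m by algebra
  have mapos: "m^2 - a^2 > 0" unfolding ma using pp E0 by (simp add: mult_neg_pos)
  then show "m^2 > a^2" by simp
  show mna: "m + a \<noteq> 0"
  proof
    assume "m + a = 0" then have "m = -a" by simp
    then show False using mapos by simp
  qed
  have r: "m - a = r*(m+a)" using rdef mna by simp
  show "m^2 - a^2 = -4*p1*p2*exp(-x)" using ma by (simp add: E_def)
  show "a > 0" "a^2 = 2 - (p1+p2)^2" using a2 by auto
  show r1: "r \<noteq> 1"
  proof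
    assume "r = 1" then show False using r a2 by simp
  qed
  have "r*(m+a)^2 = m^2 - a^2" using r by algebra
  then have "r*(m+a)^2 > 0" using mapos by simp
  then show rpos: "r > 0" using mna by (simp add: zero_less_mult_iff)
  have "m*(1-r) = a*(1+r)" using r by (simp add: algebra_simps)
  then show mr: "m = a*(1+r)/(1-r)" using r1 by (simp add: field_simps)
  have "(m^2 - a^2)*(1-r)^2 = 4*a^2*r" using \<open>m*(1-r) = a*(1+r)\<close> by algebra
  moreover have "(1-r)^2 \<noteq> 0" using r1 by simp
  ultimately have "m^2 - a^2 = 4*a^2*r/(1-r)^2" by (simp add: field_simps)
  have ex: "exp x = (m^2 - (p1+p2)^2)/(m^2 - a^2)"
    unfolding mP ma using E0 pp by (auto simp: E_def exp_minus field_simps)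
  also have "\<dots> = 1 + c/(m^2-a^2)" using mapos c a2 by (simp add: field_simps)
  also have "\<dots> = 1 + c*(1-r)^2/(4*a^2*r)" using \<open>m^2 - a^2 = 4*a^2*r/(1-r)^2\<close> by simp
  finally show "x = ln(1 + c*(1-r)^2/(4*a^2*r))" by (metis ln_exp)
qed

lemma AL2:
  fixes p1 p2 x :: real
  assumes F: "p1^2 + p2^2 + 2*p1*p2*exp(-x) = 1" and xpos: "x > 0" and P: "\<bar>p1+p2\<bar> = 1"
  shows "p1*p2 = 0" "p1 - p2 < 0 \<Longrightarrow> p1 - p2 = -1"
proof -
  have E0: "exp(-x) < 1" using xpos by simp
  have P2: "(p1+p2)^2 = 1" using P by (simp add: abs_square_eq_1)
  have "2*p1*p2*(1-exp(-x)) = (p1+p2)^2 - 1" using F by (simp add: algebra_simps power2_eq_square)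
  then show pp: "p1*p2 = 0" using E0 P2 by simp
  have "(p1-p2)^2 = 1" using P2 pp by (simp add: algebra_simps power2_eq_square)
  then show "p1 - p2 < 0 \<Longrightarrow> p1 - p2 = -1"
    by (smt (verit) power2_eq_1_iff)
qed

lemma IM:
  fixes q p q' p' :: "real \<Rightarrow> nat \<Rightarrow> real" and S x m :: "real \<Rightarrow> real" and P :: real
  assumes "q' = (\<lambda>t i. if i = (1::nat) then (S t + x t)/2 else (S t - x t)/2)"
    "p' = (\<lambda>t i. if i = (1::nat) then (P + m t)/2 else (P - m t)/2)"
    "S 0 = q 0 1 + q 0 2" "x 0 = q 0 1 - q 0 2" "P = p 0 1 + p 0 2" "m 0 = p 0 1 - p 0 2"
  shows "\<forall>i\<in>{1,2::nat}. q' 0 i = q 0 i \<and> p' 0 i = p 0 i"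
  using assms by (auto simp: field_simps)

lemma part2:
  fixes q p :: "real \<Rightarrow> nat \<Rightarrow> real" and b :: ereal
  assumes sol: "maximal_solution b q p"
    and init: "q 0 1 > q 0 2"
    and norm: "(p 0 1)\<^sup>2 + (p 0 2)\<^sup>2 + 2 * p 0 1 * p 0 2 * exp (- \<bar>q 0 1 - q 0 2\<bar>) = 1"
    and P: "\<bar>p 0 1 + p 0 2\<bar> = 1" and mneg: "p 0 1 - p 0 2 < 0"
  shows "b = \<infinity> \<and> ((\<lambda>t. q t 1 - q t 2) \<longlongrightarrow> 0) at_top"
proof -
  have reg: "regular_solution b q p" using sol unfolding maximal_solution_def by blast
  have maxi: "\<And>b' q' p'. regular_solution b' q' p' \<Longrightarrow> (\<forall>i\<in>{1,2::nat}. q' 0 i = q 0 i \<and> p' 0 i = p 0 i) \<Longrightarrow> b' \<le> b"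
    using sol unfolding maximal_solution_def by blast
  define P0 where "P0 = p 0 1 + p 0 2"
  define x0 where "x0 = q 0 1 - q 0 2"
  define S0 where "S0 = q 0 1 + q 0 2"
  have x0pos: "x0 > 0" using init by (simp add: x0_def)
  have F0: "(p 0 1)^2 + (p 0 2)^2 + 2*p 0 1*p 0 2*exp(-x0) = 1" using norm x0pos by (simp add: x0_def)
  have m0: "p 0 1 - p 0 2 = -1" using AL2(2)[OF F0 x0pos P mneg] .
  have P02: "P0^2 = 1" using P by (simp add: P0_def abs_square_eq_1)
  define C where "C = exp x0 - 1"
  have Cpos: "C > 0" using x0pos by (simp add: C_def)
  define xx where "xx t = ln (1 + C * exp (- t))" for t
  define S where "S t = S0 + P0 * (t + ln (exp t + C) - ln (1 + C))" for t
  define mm :: "real \<Rightarrow> real" where "mm t = -1" for t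
  have expxx: "exp (- xx t) = 1 / (1 + C * exp (- t))" for t
    using Cpos by (simp add: xx_def exp_minus add_pos_nonneg inverse_eq_divide)
  define q' where "q' \<equiv> \<lambda>t i. if i = (1::nat) then (S t + xx t)/2 else (S t - xx t)/2"
  define p' where "p' \<equiv> \<lambda>t i. if i = (1::nat) then (P0 + mm t)/2 else (P0 - mm t)/2"
  have dm: "(mm has_real_derivative (P0^2 - (mm t)^2) * exp (- xx t) / 2) (at t within fwd \<infinity>)" for t
    unfolding mm_def using P02 by (auto intro!: derivative_eq_intros)
  have pos1: "1 + C * exp (- t) \<noteq> 0" for t using Cpos by (smt (verit) exp_gt_zero mult_pos_pos)
  have dx: "(xx has_real_derivative mm t * (1 - exp (- xx t))) (at t within fwd \<infinity>)" for t
    unfolding expxx unfolding xx_def mm_def using Cpos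
    by (auto intro!: derivative_eq_intros simp: field_simps add_pos_nonneg pos1)
  have dS: "(S has_real_derivative P0 * (1 + exp (- xx t))) (at t within fwd \<infinity>)" for t
    unfolding expxx unfolding S_def using Cpos
    by (auto intro!: derivative_eq_intros simp: field_simps add_pos_nonneg exp_minus)
  have xpos: "xx t > 0" for t unfolding xx_def using Cpos by (intro ln_gt_zero) simp
  note GCr = GC[of "fwd \<infinity>" mm P0 xx S, OF dm dx dS xpos, folded q'_def p'_def]
  have "regular_solution \<infinity> q' p'" using GCr(1) xpos unfolding regular_solution_def by (simp add: q'_def)
  moreover have "\<forall>i\<in>{1,2::nat}. q' 0 i = q 0 i \<and> p' 0 i = p 0 i"
    by (rule IM[OF q'_def[THEN meta_eq_to_obj_eq] p'_def[THEN meta_eq_to_obj_eq]]) (use Cpos m0 in \<open>auto simp: S_def S0_def xx_def C_def x0_def mm_def P0_def\<close>)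
  ultimately have binf: "b = \<infinity>" using maxi by force
  have fwdI: "fwd b = {0..}" unfolding binf fwd_def by auto
  have z: "0 \<in> fwd b" by (simp add: fwdI)
  have pos: "q t 1 > q t 2" if "t \<in> fwd b" for t using reg that unfolding regular_solution_def by auto
  have Pt: "p t 1 + p t 2 = P0" if "t \<in> fwd b" for t using GA(1)[OF reg z that] by (simp add: P0_def)
  have Ft: "(p t 1)^2 + (p t 2)^2 + 2*p t 1*p t 2*exp(-(q t 1 - q t 2)) = 1" if "t \<in> fwd b" for t
    using GA(2)[OF reg z that] F0 by (simp add: x0_def)
  have pp: "p t 1 * p t 2 = 0" if "t \<in> fwd b" for t
    using AL2(1)[OF Ft[OF that]] pos[OF that] Pt[OF that] P by (simp add: P0_def)
  have "\<exists>c. \<forall>s\<in>fwd b. p s 1 - p s 2 = c"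
  proof (rule has_field_derivative_zero_constant[OF convex_fwd])
    fix s assume s: "s \<in> fwd b"
    show "((\<lambda>s. p s 1 - p s 2) has_real_derivative 0) (at s within fwd b)"
    proof -
      have e: "2*p s 1*p s 2*exp(-(q s 1 - q s 2)) = 0" using pp[OF s] by simp
      show ?thesis using GA(3)[OF reg z s] unfolding e .
    qed
  qed
  then have mt: "p t 1 - p t 2 = -1" if "t \<in> fwd b" for t using z that m0 by metis
  have "\<exists>c. \<forall>s\<in>fwd b. (exp (q s 1 - q s 2) - 1) * exp s = c"
  proof (rule has_field_derivative_zero_constant[OF convex_fwd])
    fix s assume s: "s \<in> fwd b"
    define X where "X s = q s 1 - q s 2" for s
    have d: "(X has_real_derivative - (1 - exp (- X s))) (at s within fwd b)"
      using GA(4)[OF reg z s] mt[OF s] unfolding X_def by simp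
    have "((\<lambda>s. (exp (X s) - 1) * exp s) has_real_derivative 0) (at s within fwd b)"
      by (auto intro!: derivative_eq_intros d simp: exp_minus field_simps)
    then show "((\<lambda>s. (exp (q s 1 - q s 2) - 1) * exp s) has_real_derivative 0) (at s within fwd b)"
      unfolding X_def .
  qed
  then have yt: "(exp (q t 1 - q t 2) - 1) * exp t = C" if "t \<in> fwd b" for t
    using z that by (metis C_def x0_def exp_zero mult_1_right)
  have xt: "q t 1 - q t 2 = ln (1 + C * exp (- t))" if "t \<in> fwd b" for t
  proof -
    have "exp (q t 1 - q t 2) = 1 + C * exp (- t)" using yt[OF that] by (simp add: exp_minus field_simps)
    then show ?thesis by (metis ln_exp)
  qed
  have e0: "((\<lambda>t. exp (- t)) \<longlongrightarrow> (0::real)) at_top"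
    using filterlim_compose[OF exp_at_bot filterlim_uminus_at_bot_at_top] by simp
  have "((\<lambda>t. ln (1 + C * exp (- t))) \<longlongrightarrow> ln (1 + C * 0)) at_top"
    by (intro tendsto_intros e0) simp
  then have lim: "((\<lambda>t. ln (1 + C * exp (- t))) \<longlongrightarrow> 0) at_top" by simp
  have ev: "eventually (\<lambda>t. ln (1 + C * exp (- t)) = q t 1 - q t 2) at_top"
    using eventually_ge_at_top[of 0] by eventually_elim (metis xt fwdI atLeast_iff)
  show ?thesis using binf Lim_transform_eventually[OF lim ev] by simp
qed

lemma algm: fixes a c R :: real assumes "R \<noteq> 1" "R>0" "a>0" "c>0"
  shows "-2*a^2*R/(1-R)^2 = ((a^2 - c) - (a*(1+R)/(1-R))^2) * (1/(1 + c*(1-R)^2/(4*a^2*R)))/2"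
proof -
  obtain d where dd: "d = 1 - R" by blast
  obtain D where DD: "D = 4*a^2*R + c*d^2" by blast
  have d: "d \<noteq> 0" using assms dd by simp
  have D: "D > 0" using assms DD by (simp add: add_pos_nonneg)
  have u: "1/(1 + c*d^2/(4*a^2*R)) = 4*a^2*R/D" using assms DD by (simp add: field_simps)
  have num: "(a^2 - c) - (a*(1+R)/d)^2 = -D/d^2"
  proof -
    have "(a^2 - c) - (a*(1+R)/d)^2 = ((a^2 - c)*d^2 - (a*(1+R))^2)/d^2" using d by (simp add: field_simps power_divide)
    also have "(a^2 - c)*d^2 - (a*(1+R))^2 = -D" unfolding DD dd by algebra
    finally show ?thesis by simp
  qed
  show ?thesis unfolding dd[symmetric] num u using D d assms by (simp add: field_simps)
qed
lemma algphi: fixes a c R :: real assumes "R \<noteq> 1" "R>0" "a>0" "c>0"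
  shows "(c*(1 - R)*(1 + R)/(4*a*R)) / (1 + c*(1-R)^2/(4*a^2*R)) = a*(1+R)/(1-R) * (1 - 1 / (1 + c*(1-R)^2/(4*a^2*R)))"
proof -
  obtain d where dd: "d = 1 - R" by blast
  obtain D where DD: "D = 4*a^2*R + c*d^2" by blast
  have d: "d \<noteq> 0" using assms dd by simp
  have D: "D > 0" using assms DD by (simp add: add_pos_nonneg)
  have u: "1 + c*d^2/(4*a^2*R) = D/(4*a^2*R)" using assms DD by (simp add: field_simps)
  have e1: "1 - 1/(D/(4*a^2*R)) = c*d^2/D" using D DD assms by (simp add: field_simps)
  have L: "(c*d*(1+R)/(4*a*R)) / (D/(4*a^2*R)) = a*c*d*(1+R)/D" using D assms by (simp add: field_simps power2_eq_square)
  have R': "a*(1+R)/d * (c*d^2/D) = a*c*d*(1+R)/D" using d D by (simp add: field_simps power2_eq_square)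
  show ?thesis unfolding dd[symmetric] u e1 L R' ..
qed


lemma fwd_ereal: "fwd (ereal T) = {t. 0 \<le> t \<and> t < T}" by (auto simp: fwd_def)

lemma part1:
  fixes q p :: "real \<Rightarrow> nat \<Rightarrow> real" and b :: ereal
  assumes sol: "maximal_solution b q p"
    and init: "q 0 1 > q 0 2"
    and norm: "(p 0 1)\<^sup>2 + (p 0 2)\<^sup>2 + 2 * p 0 1 * p 0 2 * exp (- \<bar>q 0 1 - q 0 2\<bar>) = 1"
    and P: "\<bar>p 0 1 + p 0 2\<bar> < 1" and mneg: "p 0 1 - p 0 2 < 0"
  shows "b < \<infinity> \<and> ((\<lambda>t. q t 1 - q t 2) \<longlongrightarrow> 0) (at_left (real_of_ereal b))"
proof -
  have reg: "regular_solution b q p" using sol unfolding maximal_solution_def by blast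
  have maxi: "\<And>b' q' p'. regular_solution b' q' p' \<Longrightarrow> (\<forall>i\<in>{1,2::nat}. q' 0 i = q 0 i \<and> p' 0 i = p 0 i) \<Longrightarrow> b' \<le> b"
    using sol unfolding maximal_solution_def by blast
  define P0 where "P0 = p 0 1 + p 0 2"
  define m0 where "m0 = p 0 1 - p 0 2"
  define x0 where "x0 = q 0 1 - q 0 2"
  define S0 where "S0 = q 0 1 + q 0 2"
  have x0pos: "x0 > 0" using init by (simp add: x0_def)
  have F0: "(p 0 1)^2 + (p 0 2)^2 + 2*p 0 1*p 0 2*exp(-x0) = 1" using norm x0pos by (simp add: x0_def)
  define a where "a = sqrt (2 - P0^2)"
  define c where "c = 2 - 2*P0^2"
  define K where "K = (m0 - a)/(m0 + a)"
  note A0 = AL1[OF F0 x0pos P a_def[unfolded P0_def] c_def[unfolded P0_def] m0_def K_def]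
  have apos: "a > 0" and a2: "a^2 = 2 - P0^2" using A0(8,9) by (auto simp: P0_def)
  have cpos: "c > 0" using P by (simp add: c_def P0_def abs_square_less_1)
  have ac: "a^2 = P0^2 + c" using a2 by (simp add: c_def)
  have K1: "K > 1"
  proof (rule ccontr)
    assume "\<not> K > 1" then have "1 - K > 0" using A0(1) by simp
    then have "a*(1+K)/(1-K) > 0" using apos A0(2) by simp
    then show False using A0(3) mneg by (simp add: m0_def)
  qed
  define T where "T = ln K / a"
  have Tpos: "T > 0" using K1 apos by (simp add: T_def)
  define r where "r t = K * exp (- a * t)" for t
  have rexp: "r t = exp (ln K - a * t)" for t using K1 by (simp add: r_def exp_diff exp_minus field_simps)
  have rpos: "r t > 0" for t using K1 by (simp add: r_def)
  have r1: "r t > 1" if "t < T" for t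
  proof -
    have "ln K - a * t > 0" using that apos by (simp add: T_def field_simps)
    then show ?thesis unfolding rexp by simp
  qed
  have rT: "r T = 1" unfolding rexp using apos by (simp add: T_def)
  define u where "u t = 1 + c*(1 - r t)^2/(4*a^2*r t)" for t
  have upos: "u t > 0" for t using rpos[of t] cpos apos by (simp add: u_def add_pos_nonneg)
  define mm where "mm t = a*(1 + r t)/(1 - r t)" for t
  define phi where "phi t = ln (u t)" for t
  have expphi: "exp (- phi t) = 1 / u t" for t using upos[of t] by (simp add: phi_def exp_minus inverse_eq_divide)
  have dr: "(r has_real_derivative - a * r t) (at t)" for t
    unfolding r_def by (auto intro!: derivative_eq_intros)
  have dmm0: "(mm has_real_derivative - 2*a^2*r t/(1-r t)^2) (at t)" if "r t \<noteq> 1" for t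
    unfolding mm_def using that
    by (auto intro!: derivative_eq_intros dr simp: field_simps power2_eq_square)
  have du0: "(u has_real_derivative c*(1 - r t)*(1 + r t)/(4*a*r t)) (at t)" for t
    unfolding u_def using rpos[of t] apos
    by (auto intro!: derivative_eq_intros dr simp: field_simps power2_eq_square)
  have P0a: "P0^2 = a^2 - c" using ac by simp
  have dm: "(mm has_real_derivative (P0^2 - (mm t)^2) * exp (- phi t) / 2) (at t)" if "r t \<noteq> 1" for t
  proof -
    have "-2*a^2*r t/(1-r t)^2 = (P0^2 - (mm t)^2) * (1/u t)/2"
      unfolding P0a mm_def u_def using algm[OF that rpos[of t] apos cpos] .
    then show ?thesis using dmm0[OF that] unfolding expphi by simp
  qed
  have dphi: "(phi has_real_derivative mm t * (1 - exp (- phi t))) (at t)" if "r t \<noteq> 1" for t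
  proof -
    have "(phi has_real_derivative (c*(1 - r t)*(1 + r t)/(4*a*r t)) / u t) (at t)"
      unfolding phi_def[abs_def] using upos[of t] by (auto intro!: derivative_eq_intros du0)
    moreover have "(c*(1 - r t)*(1 + r t)/(4*a*r t)) / u t = mm t * (1 - 1 / u t)"
      unfolding mm_def u_def using algphi[OF that rpos[of t] apos cpos] .
    ultimately show ?thesis unfolding expphi by simp
  qed
  define g where "g s = P0 * (1 + exp (- phi s))" for s
  have cu: "continuous_on {0..T} u" unfolding u_def r_def using K1 apos
    by (intro continuous_intros) auto
  have unz: "\<forall>x\<in>{0..T}. u x \<noteq> 0" using upos by (metis less_irrefl)
  have cont: "continuous_on {0..T} g"
    unfolding g_def phi_def by (intro continuous_intros continuous_on_ln[OF cu unz])
  define S where "S t = S0 + integral {0..t} g" for t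
  have dS: "(S has_real_derivative P0 * (1 + exp (- phi t))) (at t within fwd (ereal T))" if "t \<in> fwd (ereal T)" for t
  proof -
    have "((\<lambda>x. integral {0..x} g) has_real_derivative g t) (at t within fwd (ereal T))"
      by (rule has_field_derivative_subset[OF integral_has_real_derivative[OF cont]]) (use that in \<open>auto simp: fwd_ereal\<close>)
    then have "(S has_real_derivative g t) (at t within fwd (ereal T))"
      unfolding S_def by (auto intro!: derivative_eq_intros)
    then show ?thesis by (simp add: g_def)
  qed
  have ne: "r t \<noteq> 1" if "t \<in> fwd (ereal T)" for t using r1[of t] that by (auto simp: fwd_ereal)
  have phipos: "phi t > 0" if "t \<in> fwd (ereal T)" for t
  proof -
    have "c*(1 - r t)^2/(4*a^2*r t) > 0" using ne[OF that] cpos apos rpos[of t] by simp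
    then show ?thesis unfolding phi_def u_def by (intro ln_gt_zero) simp
  qed
  define q' where "q' \<equiv> \<lambda>t i. if i = (1::nat) then (S t + phi t)/2 else (S t - phi t)/2"
  define p' where "p' \<equiv> \<lambda>t i. if i = (1::nat) then (P0 + mm t)/2 else (P0 - mm t)/2"
  note GCr = GC[of "fwd (ereal T)" mm P0 phi S, OF has_field_derivative_at_within[OF dm[OF ne]]
     has_field_derivative_at_within[OF dphi[OF ne]] dS phipos, folded q'_def p'_def]
  have "regular_solution (ereal T) q' p'" using GCr(1) phipos unfolding regular_solution_def by (simp add: q'_def)
  moreover have "\<forall>i\<in>{1,2::nat}. q' 0 i = q 0 i \<and> p' 0 i = p 0 i"
  proof (rule IM[OF q'_def[THEN meta_eq_to_obj_eq] p'_def[THEN meta_eq_to_obj_eq]])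
    show "S 0 = q 0 1 + q 0 2" by (simp add: S_def S0_def)
    show "phi 0 = q 0 1 - q 0 2" using A0(4) by (simp add: phi_def u_def r_def x0_def)
    show "P0 = p 0 1 + p 0 2" by (simp add: P0_def)
    show "mm 0 = p 0 1 - p 0 2" using A0(3) by (simp add: mm_def r_def m0_def)
  qed
  ultimately have Tb: "ereal T \<le> b" using maxi by blast
  have "ereal 0 < b" using less_le_trans[of "ereal 0" "ereal T" b] Tb Tpos by simp
  then have z: "0 \<in> fwd b" by (simp add: fwd_def)
  have pos: "q t 1 > q t 2" if "t \<in> fwd b" for t using reg that unfolding regular_solution_def by auto
  have Pt: "p t 1 + p t 2 = P0" if "t \<in> fwd b" for t using GA(1)[OF reg z that] by (simp add: P0_def)
  have Ft: "(p t 1)^2 + (p t 2)^2 + 2*p t 1*p t 2*exp(-(q t 1 - q t 2)) = 1" if "t \<in> fwd b" for t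
    using GA(2)[OF reg z that] F0 by (simp add: x0_def)
  define M where "M s = p s 1 - p s 2" for s
  have At: "(M t - a)/(M t + a) \<noteq> 1 \<and> q t 1 - q t 2 = ln(1 + c*(1-(M t - a)/(M t + a))^2/(4*a^2*((M t - a)/(M t + a))))
      \<and> M t + a \<noteq> 0 \<and> (M t)^2 - a^2 = -4*p t 1*p t 2*exp(-(q t 1 - q t 2))" if t: "t \<in> fwd b" for t
  proof -
    have a_t: "a = sqrt(2 - (p t 1 + p t 2)^2)" using Pt[OF t] by (simp add: a_def)
    have c_t: "c = 2 - 2*(p t 1 + p t 2)^2" using Pt[OF t] by (simp add: c_def)
    have P_t: "\<bar>p t 1 + p t 2\<bar> < 1" using Pt[OF t] P by (simp add: P0_def)
    have x_t: "q t 1 - q t 2 > 0" using pos[OF t] by simp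
    note B = AL1[OF Ft[OF t] x_t P_t a_t c_t M_def refl]
    show ?thesis using B(1,4,6,7) by simp
  qed
  have "\<exists>k. \<forall>s\<in>fwd b. (M s - a)/(M s + a) * exp (a * s) = k"
  proof (rule has_field_derivative_zero_constant[OF convex_fwd])
    fix s assume s: "s \<in> fwd b"
    have dM: "(M has_real_derivative -((M s)^2 - a^2)/2) (at s within fwd b)"
    proof -
      have e: "2*p s 1*p s 2*exp(-(q s 1 - q s 2)) = -((M s)^2 - a^2)/2" using At[OF s] by simp
      have Mf: "M = (\<lambda>s. p s 1 - p s 2)" by (simp add: M_def fun_eq_iff)
      show ?thesis using GA(3)[OF reg z s] unfolding e Mf[symmetric] .
    qed
    have nz: "M s + a \<noteq> 0" using At[OF s] by simp
    show "((\<lambda>s. (M s - a)/(M s + a) * exp (a * s)) has_real_derivative 0) (at s within fwd b)"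
      using nz by (auto intro!: derivative_eq_intros dM simp: field_simps power2_eq_square)
  qed
  then have hK: "(M t - a)/(M t + a) * exp (a * t) = K" if "t \<in> fwd b" for t
    using z that by (metis K_def M_def m0_def exp_zero mult_1_right mult_zero_right)
  have Mr: "(M t - a)/(M t + a) = r t" if "t \<in> fwd b" for t
    using hK[OF that] by (simp add: r_def exp_minus field_simps)
  have bT: "b \<le> ereal T"
  proof (rule ccontr)
    assume "\<not> b \<le> ereal T"
    then have "T \<in> fwd b" using Tpos by (simp add: fwd_def not_le)
    then show False using At[of T] Mr[of T] rT by simp
  qed
  have beq: "b = ereal T" using Tb bT by simp
  have xphi: "q t 1 - q t 2 = phi t" if "t \<in> fwd b" for t
    using At[OF that] Mr[OF that] by (simp add: phi_def u_def)
  have cu1: "isCont u T" unfolding u_def r_def using K1 apos by (intro continuous_intros) auto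
  have "(u \<longlongrightarrow> u T) (at_left T)"
    using cu1 unfolding isCont_def by (rule tendsto_within_subset) simp
  moreover have uT: "u T = 1" by (simp add: u_def rT)
  ultimately have "((\<lambda>t. ln (u t)) \<longlongrightarrow> ln 1) (at_left T)" by (intro tendsto_ln) auto
  then have lim: "(phi \<longlongrightarrow> 0) (at_left T)" by (simp add: phi_def[abs_def])
  have ev: "eventually (\<lambda>t. phi t = q t 1 - q t 2) (at_left T)"
    using eventually_at_left_real[OF Tpos] proof eventually_elim
    case (elim t)
    then have "t \<in> fwd b" by (simp add: beq fwd_ereal)
    then show ?case using xphi by simp
  qed
  show ?thesis using beq Lim_transform_eventually[OF lim ev] by simp
qed
theorem lemma3:
  fixes q p :: "real \<Rightarrow> nat \<Rightarrow> real" and b :: ereal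
  assumes sol: "maximal_solution b q p"
    and init: "q 0 1 > q 0 2"
    and norm: "(p 0 1)\<^sup>2 + (p 0 2)\<^sup>2 + 2 * p 0 1 * p 0 2 * exp (- \<bar>q 0 1 - q 0 2\<bar>) = 1"
  shows "(\<bar>p 0 1 + p 0 2\<bar> < 1 \<and> p 0 1 - p 0 2 < 0 \<longrightarrow>
            b < \<infinity> \<and> ((\<lambda>t. q t 1 - q t 2) \<longlongrightarrow> 0) (at_left (real_of_ereal b)))
       \<and> (\<bar>p 0 1 + p 0 2\<bar> = 1 \<and> p 0 1 - p 0 2 < 0 \<longrightarrow>
            b = \<infinity> \<and> ((\<lambda>t. q t 1 - q t 2) \<longlongrightarrow> 0) at_top)"
  using part1[OF sol init norm] part2[OF sol init norm] by blast

end
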